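(* Let $H$ be a graph with tree-width $k-1$ and let $(\{X_i\mid i\in I\},T=(I,F))$ be a tree-decomposition of $H$ of width $k-1$. For an integer $r\ge0$ and $i\in I$ let $X_i^{(r)}=D_r(X_i,H):=\bigcup_{x\in X_i}D_r(x,H)$. Then for every integer $r\ge0$, $(\{X_i^{(r)}\mid i\in I\},T=(I,F))$ is a tree-decomposition of $H$ with $k$-breadth at most $r$.
   Context: Graphs are finite, connected, unweighted, undirected and simple; $d_H$ is the shortest-path distance and $D_r(x,H)=\{u: d_H(u,x)\le r\}$. A tree-decomposition of $H=(V,E)$ is a pair $(\{X_i\mid i\in I\},T=(I,F))$ with $T$ a tree and bags $X_i\subseteq V$ such that (1) $\bigcup_i X_i=V$; (2) every edge lies in some bag; (3) for each $v\in V$ the nodes containing $v$ induce a connected subtree of $T$. Its width is $\max_i|X_i|-1$, and the tree-width of $H$ is the minimum width over all its tree-decompositions. The $k$-breadth of a tree-decomposition is the minimum integer $r$ such that every bag is contained in a union of at most $k$ disks of $H$ of radius $r$. *)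

theory Defs
  imports Main
begin

definition simple_graph :: "'a set \<Rightarrow> 'a set set \<Rightarrow> bool" where
  "simple_graph V E \<longleftrightarrow> (\<forall>e\<in>E. e \<subseteq> V \<and> card e = 2)"

definition is_walk :: "'a set set \<Rightarrow> 'a list \<Rightarrow> bool" where
  "is_walk E xs \<longleftrightarrow> xs \<noteq> [] \<and> (\<forall>j. Suc j < length xs \<longrightarrow> {xs ! j, xs ! Suc j} \<in> E)"

definition connected_on :: "'a set set \<Rightarrow> 'a set \<Rightarrow> bool" where
  "connected_on E S \<longleftrightarrow> (\<forall>u\<in>S. \<forall>v\<in>S. \<exists>xs. is_walk E xs \<and> set xs \<subseteq> S \<and> hd xs = u \<and> last xs = v)"

definition conn_graph :: "'a set \<Rightarrow> 'a set set \<Rightarrow> bool" where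
  "conn_graph V E \<longleftrightarrow> finite V \<and> V \<noteq> {} \<and> simple_graph V E \<and> connected_on E V"

definition has_cycle :: "'a set \<Rightarrow> 'a set set \<Rightarrow> bool" where
  "has_cycle V E \<longleftrightarrow> (\<exists>xs. distinct xs \<and> length xs \<ge> 3 \<and> set xs \<subseteq> V \<and> is_walk E xs
      \<and> {last xs, hd xs} \<in> E)"

definition is_tree :: "'i set \<Rightarrow> 'i set set \<Rightarrow> bool" where
  "is_tree I F \<longleftrightarrow> conn_graph I F \<and> \<not> has_cycle I F"

definition gdist :: "'a set \<Rightarrow> 'a set set \<Rightarrow> 'a \<Rightarrow> 'a \<Rightarrow> nat" where
  "gdist V E u v = (LEAST n. \<exists>xs. is_walk E xs \<and> set xs \<subseteq> V \<and> hd xs = u \<and> last xs = v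
      \<and> length xs = Suc n)"

definition disk :: "'a set \<Rightarrow> 'a set set \<Rightarrow> nat \<Rightarrow> 'a \<Rightarrow> 'a set" where
  "disk V E r x = {u \<in> V. gdist V E u x \<le> r}"

definition disk_set :: "'a set \<Rightarrow> 'a set set \<Rightarrow> nat \<Rightarrow> 'a set \<Rightarrow> 'a set" where
  "disk_set V E r S = (\<Union>x\<in>S. disk V E r x)"

definition tree_decomposition ::
  "'a set \<Rightarrow> 'a set set \<Rightarrow> ('i \<Rightarrow> 'a set) \<Rightarrow> 'i set \<Rightarrow> 'i set set \<Rightarrow> bool" where
  "tree_decomposition V E X I F \<longleftrightarrow>
     is_tree I F \<and> (\<forall>i\<in>I. X i \<subseteq> V) \<and>
     (\<Union>i\<in>I. X i) = V \<and>
     (\<forall>e\<in>E. \<exists>i\<in>I. e \<subseteq> X i) \<and>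
     (\<forall>v\<in>V. connected_on F {i \<in> I. v \<in> X i})"

definition td_width :: "('i \<Rightarrow> 'a set) \<Rightarrow> 'i set \<Rightarrow> int" where
  "td_width X I = int (Max ((\<lambda>i. card (X i)) ` I)) - 1"

text \<open>Tree-width: minimum width over all tree-decompositions (index sets taken
  in nat; every finite tree can be re-indexed by naturals).\<close>
definition treewidth :: "'a set \<Rightarrow> 'a set set \<Rightarrow> int" where
  "treewidth V E = Min {w. \<exists>(X :: nat \<Rightarrow> 'a set) I F. tree_decomposition V E X I F \<and> td_width X I = w}"

definition k_breadth :: "'a set \<Rightarrow> 'a set set \<Rightarrow> nat \<Rightarrow> ('i \<Rightarrow> 'a set) \<Rightarrow> 'i set \<Rightarrow> nat" where
  "k_breadth V E k X I = (LEAST r. \<forall>i\<in>I. \<exists>C. C \<subseteq> V \<and> card C \<le> k \<and> X i \<subseteq> (\<Union>c\<in>C. disk V E r c))"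

end

theory Submission
  imports Defs
begin

definition adjS :: "'i set set \<Rightarrow> 'i set \<Rightarrow> 'i \<Rightarrow> 'i \<Rightarrow> bool" where
  "adjS F S a b \<longleftrightarrow> a \<in> S \<and> b \<in> S \<and> {a,b} \<in> F"

lemma walk_cons: "is_walk E (x # xs) \<Longrightarrow> xs \<noteq> [] \<Longrightarrow> is_walk E xs \<and> {x, hd xs} \<in> E"
proof -
  assume a: "is_walk E (x # xs)" "xs \<noteq> []"
  have "is_walk E xs" unfolding is_walk_def
  proof (intro conjI allI impI)
    fix j assume "Suc j < length xs"
    with a(1) have "{(x#xs) ! Suc j, (x#xs) ! Suc (Suc j)} \<in> E" unfolding is_walk_def by auto
    then show "{xs ! j, xs ! Suc j} \<in> E" by simp
  qed (use a in auto)
  moreover have "{x, hd xs} \<in> E"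
  proof -
    have "Suc 0 < length (x # xs)" using a(2) by simp
    then have "{(x#xs) ! 0, (x#xs) ! Suc 0} \<in> E" using a(1) unfolding is_walk_def by blast
    then show ?thesis using a(2) by (simp add: hd_conv_nth)
  qed
  ultimately show ?thesis by simp
qed

lemma walk_prepend: "is_walk E xs \<Longrightarrow> {x, hd xs} \<in> E \<Longrightarrow> is_walk E (x # xs)"
  unfolding is_walk_def
proof (intro conjI allI impI)
  fix j assume a: "xs \<noteq> [] \<and> (\<forall>j. Suc j < length xs \<longrightarrow> {xs ! j, xs ! Suc j} \<in> E)"
    "{x, hd xs} \<in> E" "Suc j < length (x # xs)"
  show "{(x # xs) ! j, (x # xs) ! Suc j} \<in> E"
  proof (cases j)
    case 0 then show ?thesis using a by (simp add: hd_conv_nth)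
  next
    case (Suc m) then show ?thesis using a by simp
  qed
qed simp

lemma walk_to_rtc: "is_walk F xs \<Longrightarrow> set xs \<subseteq> S \<Longrightarrow> (adjS F S)\<^sup>*\<^sup>* (hd xs) (last xs)"
proof (induction xs)
  case Nil then show ?case by (simp add: is_walk_def)
next
  case (Cons x xs)
  show ?case
  proof (cases "xs = []")
    case True then show ?thesis by simp
  next
    case False
    from walk_cons[OF Cons.prems(1) False] have w: "is_walk F xs" "{x, hd xs} \<in> F" by blast+
    have xS: "x \<in> S" using Cons.prems(2) by simp
    have hS: "hd xs \<in> S" using Cons.prems(2) False hd_in_set by fastforce
    have a: "adjS F S x (hd xs)" using w(2) xS hS unfolding adjS_def by blast
    have "set xs \<subseteq> S" using Cons.prems(2) by simp
    then have b: "(adjS F S)\<^sup>*\<^sup>* (hd xs) (last xs)" using Cons.IH w(1) by blast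
    have "(adjS F S)\<^sup>*\<^sup>* x (last xs)" by (rule converse_rtranclp_into_rtranclp[OF a b])
    then show ?thesis using False by simp
  qed
qed

lemma rtc_to_walk: "(adjS F S)\<^sup>*\<^sup>* a b \<Longrightarrow> b \<in> S \<Longrightarrow>
   \<exists>xs. is_walk F xs \<and> set xs \<subseteq> S \<and> hd xs = a \<and> last xs = b"
proof (induction rule: converse_rtranclp_induct)
  case base
  then show ?case by (intro exI[of _ "[b]"]) (simp add: is_walk_def)
next
  case (step y z)
  then obtain xs where xs: "is_walk F xs" "set xs \<subseteq> S" "hd xs = z" "last xs = b" by blast
  have "is_walk F (y # xs)" using walk_prepend[OF xs(1)] step(1) xs(3) unfolding adjS_def by auto
  moreover have "xs \<noteq> []" using xs(1) by (simp add: is_walk_def)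
  ultimately show ?case using xs step(1) unfolding adjS_def by (intro exI[of _ "y # xs"]) auto
qed

lemma adjS_sym: "(adjS F S)\<^sup>*\<^sup>* a b \<Longrightarrow> (adjS F S)\<^sup>*\<^sup>* b a"
proof (induction rule: rtranclp_induct)
  case base then show ?case by simp
next
  case (step y z)
  have "adjS F S z y" using step(2) unfolding adjS_def by (auto simp: insert_commute)
  then show ?case using step(3) by (simp add: converse_rtranclp_into_rtranclp)
qed

lemma walk_chain:
  fixes R :: "'i \<Rightarrow> 'i \<Rightarrow> bool"
  assumes "is_walk E ys"
    and "\<forall>u\<in>set ys. \<forall>i\<in>T u. \<forall>j\<in>T u. R i j"
    and ed: "\<And>a b. {a,b} \<in> E \<Longrightarrow> \<exists>k. k \<in> T a \<and> k \<in> T b"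
    and tr: "\<And>a b c. R a b \<Longrightarrow> R b c \<Longrightarrow> R a c"
  shows "\<forall>i\<in>T (last ys). \<forall>j\<in>T (hd ys). R i j"
  using assms(1,2)
proof (induction ys)
  case Nil then show ?case by (simp add: is_walk_def)
next
  case (Cons x ys)
  show ?case
  proof (cases "ys = []")
    case True
    have "\<forall>i\<in>T x. \<forall>j\<in>T x. R i j" using Cons.prems(2) by simp
    then show ?thesis using True by simp
  next
    case False
    from walk_cons[OF Cons.prems(1) False] have w: "is_walk E ys" "{x, hd ys} \<in> E" by blast+
    obtain k where k: "k \<in> T x" "k \<in> T (hd ys)" using ed[OF w(2)] by blast
    have p2: "\<forall>u\<in>set ys. \<forall>i\<in>T u. \<forall>j\<in>T u. R i j" using Cons.prems(2) by simp
    have IH: "\<forall>i\<in>T (last ys). \<forall>j\<in>T (hd ys). R i j" by (rule Cons.IH[OF w(1) p2])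
    have px: "\<forall>i\<in>T x. \<forall>j\<in>T x. R i j" using Cons.prems(2) by simp
    show ?thesis
    proof (intro ballI)
      fix i j assume i: "i \<in> T (last (x # ys))" and j: "j \<in> T (hd (x # ys))"
      have i': "i \<in> T (last ys)" using i False by simp
      have j': "j \<in> T x" using j by simp
      have "R i k" using IH i' k(2) by blast
      moreover have "R k j" using px k(1) j' by blast
      ultimately show "R i j" by (rule tr)
    qed
  qed
qed

lemma walk_take: "is_walk E xs \<Longrightarrow> 0 < n \<Longrightarrow> is_walk E (take n xs)"
  unfolding is_walk_def
proof (intro conjI allI impI)
  fix j assume a: "xs \<noteq> [] \<and> (\<forall>j. Suc j < length xs \<longrightarrow> {xs ! j, xs ! Suc j} \<in> E)"
    "0 < n" "Suc j < length (take n xs)"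
  then have "Suc j < length xs" "Suc j < n" by simp_all
  then show "{take n xs ! j, take n xs ! Suc j} \<in> E" using a(1) by simp
qed simp

lemma gdist_self: "v \<in> V \<Longrightarrow> gdist V E v v = 0"
  unfolding gdist_def
  by (rule Least_eq_0) (intro exI[of _ "[v]"], simp add: is_walk_def)

lemma gdist_walk:
  assumes "connected_on E V" "v \<in> V" "x \<in> V"
  shows "\<exists>xs. is_walk E xs \<and> set xs \<subseteq> V \<and> hd xs = v \<and> last xs = x \<and> length xs = Suc (gdist V E v x)"
proof -
  obtain xs where xs: "is_walk E xs" "set xs \<subseteq> V" "hd xs = v" "last xs = x"
    using assms unfolding connected_on_def by blast
  then have "length xs = Suc (length xs - 1)" by (cases xs) (auto simp: is_walk_def)
  with xs have "\<exists>n. \<exists>xs. is_walk E xs \<and> set xs \<subseteq> V \<and> hd xs = v \<and> last xs = x \<and> length xs = Suc n"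
    by blast
  then show ?thesis unfolding gdist_def by (rule LeastI_ex)
qed

lemma gdist_le_walk:
  assumes "is_walk E xs" "set xs \<subseteq> V" "hd xs = v" "last xs = x"
  shows "gdist V E v x \<le> length xs - 1"
proof -
  have "length xs = Suc (length xs - 1)" using assms by (cases xs) (auto simp: is_walk_def)
  then have "\<exists>ys. is_walk E ys \<and> set ys \<subseteq> V \<and> hd ys = v \<and> last ys = x \<and> length ys = Suc (length xs - 1)"
    using assms by blast
  then show ?thesis unfolding gdist_def by (rule Least_le)
qed

theorem lemma14:
  fixes V :: "'a set" and E :: "'a set set" and X :: "'i \<Rightarrow> 'a set"
    and I :: "'i set" and F :: "'i set set" and k r :: nat
  assumes "conn_graph V E"
    and "treewidth V E = int k - 1"
    and "tree_decomposition V E X I F"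
    and "td_width X I = int k - 1"
  shows "tree_decomposition V E (\<lambda>i. disk_set V E r (X i)) I F
         \<and> k_breadth V E k (\<lambda>i. disk_set V E r (X i)) I \<le> r"
proof -
  have tdall: "is_tree I F \<and> (\<forall>i\<in>I. X i \<subseteq> V) \<and> (\<Union>i\<in>I. X i) = V \<and>
     (\<forall>e\<in>E. \<exists>i\<in>I. e \<subseteq> X i) \<and> (\<forall>v\<in>V. connected_on F {i \<in> I. v \<in> X i})"
    using assms(3) unfolding tree_decomposition_def by blast
  then have tree: "is_tree I F" and XV0: "\<forall>i\<in>I. X i \<subseteq> V" and cov0: "(\<Union>i\<in>I. X i) = V"
    and ed0: "\<forall>e\<in>E. \<exists>i\<in>I. e \<subseteq> X i" and cn0: "\<forall>v\<in>V. connected_on F {i \<in> I. v \<in> X i}"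
    by blast+
  have conV: "connected_on E V" using assms(1) unfolding conn_graph_def by blast
  have XV: "\<And>i. i \<in> I \<Longrightarrow> X i \<subseteq> V" using XV0 by blast
  have self: "\<And>u. u \<in> V \<Longrightarrow> u \<in> disk V E r u" unfolding disk_def using gdist_self by fastforce
  have Xsub: "\<And>i. i \<in> I \<Longrightarrow> X i \<subseteq> disk_set V E r (X i)"
    unfolding disk_set_def using XV self by blast
  have sub: "\<And>i. disk_set V E r (X i) \<subseteq> V" unfolding disk_set_def disk_def by blast
  have cover: "(\<Union>i\<in>I. disk_set V E r (X i)) = V"
  proof
    show "(\<Union>i\<in>I. disk_set V E r (X i)) \<subseteq> V" using sub by blast
    show "V \<subseteq> (\<Union>i\<in>I. disk_set V E r (X i))"
    proof
      fix v assume "v \<in> V"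
      then obtain i where "i \<in> I" "v \<in> X i" using cov0 by blast
      then show "v \<in> (\<Union>i\<in>I. disk_set V E r (X i))" using Xsub by blast
    qed
  qed
  have edges: "\<forall>e\<in>E. \<exists>i\<in>I. e \<subseteq> disk_set V E r (X i)"
  proof
    fix e assume "e \<in> E"
    then obtain i where "i \<in> I" "e \<subseteq> X i" using ed0 by blast
    then show "\<exists>i\<in>I. e \<subseteq> disk_set V E r (X i)" using Xsub by blast
  qed
  define T where "T u = {i \<in> I. u \<in> X i}" for u
  have conn: "connected_on F {i \<in> I. v \<in> disk_set V E r (X i)}" if vV: "v \<in> V" for v
  proof -
    define S where "S = {i \<in> I. v \<in> disk_set V E r (X i)}"
    define R where "R = (adjS F S)\<^sup>*\<^sup>*"
    obtain i0 where i0: "i0 \<in> I" "v \<in> X i0" using cov0 vV by blast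
    have i0S: "i0 \<in> S" unfolding S_def using i0 Xsub by blast
    have toi0: "R i i0" if iS: "i \<in> S" for i
    proof -
      obtain x where x: "x \<in> X i" "v \<in> disk V E r x" "i \<in> I"
        using iS unfolding S_def disk_set_def by blast
      have xV: "x \<in> V" using x XV by blast
      have dx: "gdist V E v x \<le> r" using x unfolding disk_def by simp
      obtain xs where xs: "is_walk E xs" "set xs \<subseteq> V" "hd xs = v" "last xs = x"
        "length xs = Suc (gdist V E v x)" using gdist_walk[OF conV vV xV] by (elim exE conjE) (rule that)
      have TS: "T u \<subseteq> S" if uin: "u \<in> set xs" for u
      proof -
        obtain j where j: "j < length xs" "xs ! j = u" using in_set_conv_nth[THEN iffD1, OF uin] by blast
        have "is_walk E (take (Suc j) xs)" using walk_take[OF xs(1)] by simp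
        moreover have "set (take (Suc j) xs) \<subseteq> V" using xs(2) set_take_subset[of "Suc j" xs] by (rule order_trans[rotated])
        moreover have "hd (take (Suc j) xs) = v" using xs(3) j
          by (cases xs) auto
        moreover have "last (take (Suc j) xs) = u" using j
          by (simp add: take_Suc_conv_app_nth)
        ultimately have "gdist V E v u \<le> length (take (Suc j) xs) - 1"
          by (rule gdist_le_walk)
        also have "\<dots> \<le> j" by simp
        also have "j \<le> r" using j xs(5) dx by simp
        finally have "v \<in> disk V E r u" unfolding disk_def using vV by simp
        show ?thesis
        proof
          fix i assume "i \<in> T u"
          then have "i \<in> I" "u \<in> X i" unfolding T_def by auto
          then show "i \<in> S" unfolding S_def disk_set_def using \<open>v \<in> disk V E r u\<close> by blast
        qed
      qed
      have inner: "\<forall>u\<in>set xs. \<forall>a\<in>T u. \<forall>b\<in>T u. R a b"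
      proof (intro ballI)
        fix u a b assume u: "u \<in> set xs" and a: "a \<in> T u" and b: "b \<in> T u"
        have "u \<in> V" using u xs(2) by blast
        then have "connected_on F (T u)" using cn0 unfolding T_def by blast
        then obtain ws where ws: "is_walk F ws" "set ws \<subseteq> T u" "hd ws = a" "last ws = b"
          using a b unfolding connected_on_def by blast
        have "(adjS F (T u))\<^sup>*\<^sup>* a b" using walk_to_rtc[OF ws(1,2)] ws by simp
        moreover have "\<forall>a b. adjS F (T u) a b \<longrightarrow> adjS F S a b"
          using TS[OF u] unfolding adjS_def by blast
        ultimately show "R a b" unfolding R_def using mono_rtranclp by metis
      qed
      have ed: "\<exists>k. k \<in> T a \<and> k \<in> T b" if abE: "{a,b} \<in> E" for a b
      proof -
        obtain k where "k \<in> I" "{a,b} \<subseteq> X k" using ed0 abE by blast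
        then show ?thesis unfolding T_def by blast
      qed
      have tr: "R a b \<Longrightarrow> R b c \<Longrightarrow> R a c" for a b c unfolding R_def by (rule rtranclp_trans)
      have "\<forall>a\<in>T (last xs). \<forall>b\<in>T (hd xs). R a b"
        by (rule walk_chain[OF xs(1) inner ed tr])
      moreover have "i \<in> T (last xs)" using x xs(4) unfolding T_def by simp
      moreover have "i0 \<in> T (hd xs)" using i0 xs(3) unfolding T_def by simp
      ultimately show ?thesis by blast
    qed
    have "\<forall>a\<in>S. \<forall>b\<in>S. \<exists>xs. is_walk F xs \<and> set xs \<subseteq> S \<and> hd xs = a \<and> last xs = b"
    proof (intro ballI)
      fix a b assume a: "a \<in> S" and b: "b \<in> S"
      have 1: "(adjS F S)\<^sup>*\<^sup>* a i0" using toi0[OF a] unfolding R_def .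
      have 2: "(adjS F S)\<^sup>*\<^sup>* i0 b" using toi0[OF b] unfolding R_def by (rule adjS_sym)
      have "(adjS F S)\<^sup>*\<^sup>* a b" by (rule rtranclp_trans[OF 1 2])
      then show "\<exists>xs. is_walk F xs \<and> set xs \<subseteq> S \<and> hd xs = a \<and> last xs = b"
        by (rule rtc_to_walk[OF _ b])
    qed
    then show ?thesis unfolding connected_on_def S_def .
  qed
  have part1: "tree_decomposition V E (\<lambda>i. disk_set V E r (X i)) I F"
    unfolding tree_decomposition_def
    using tree sub cover edges conn by (intro conjI) auto
  have finI: "finite I" "I \<noteq> {}" using tree unfolding is_tree_def conn_graph_def by auto
  have Mx: "Max ((\<lambda>i. card (X i)) ` I) = k" using assms(4) unfolding td_width_def by simp
  have cardk: "card (X i) \<le> k" if "i \<in> I" for i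
    using Mx finI that by (metis Max_ge finite_imageI image_eqI)
  have "\<forall>i\<in>I. \<exists>C. C \<subseteq> V \<and> card C \<le> k \<and> disk_set V E r (X i) \<subseteq> (\<Union>c\<in>C. disk V E r c)"
    using XV cardk unfolding disk_set_def by blast
  then have "k_breadth V E k (\<lambda>i. disk_set V E r (X i)) I \<le> r"
    unfolding k_breadth_def by (rule Least_le)
  with part1 show ?thesis by blast
qed

end
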